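(* Let $D\ge 1$ be an integer and let $Q_D$ be the $D$-dimensional hypercube with vertex set $X=\{0,1\}^D$ and adjacency matrix $A$. The matrices $I,\alpha_1,\alpha_2,\ldots,\alpha_D$ form a basis for the space of symmetric $A$-like matrices of $Q_D$. In particular, this space has dimension $D+1$.
   Context: $Q_D$ is the graph with vertex set $X=\{0,1\}^D$ (sequences $x=(x_1,\ldots,x_D)$ with $x_i\in\{0,1\}$), two vertices being adjacent iff they differ in exactly one coordinate. $\mathrm{Mat}_X(\mathbb{R})$ denotes the real matrices with rows and columns indexed by $X$; $A$ is the adjacency matrix of $Q_D$ and $I$ the identity. A matrix $B\in\mathrm{Mat}_X(\mathbb{R})$ is called $A$-like if (i) $BA=AB$ and (ii) $B_{xy}=0$ for all $x,y\in X$ that are neither equal nor adjacent. For $1\le i\le D$, two vertices are $i$-adjacent if they differ in the $i$-th coordinate and agree in all others, and $\alpha_i\in\mathrm{Mat}_X(\mathbb{R})$ has $(x,y)$-entry $1$ if $x,y$ are $i$-adjacent and $0$ otherwise. *)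

theory Defs
  imports "HOL-Analysis.Analysis"
begin

text \<open>The hypercube Q_D: vertices are functions x :: 'n \<Rightarrow> bool, where the
  finite type 'n indexes the D = CARD('n) coordinates (so D \<ge> 1 automatically).\<close>

definition cube_adj :: "('n::finite \<Rightarrow> bool) \<Rightarrow> ('n \<Rightarrow> bool) \<Rightarrow> bool" where
  "cube_adj x y \<longleftrightarrow> card {i. x i \<noteq> y i} = 1"

definition cube_A :: "real ^ ('n::finite \<Rightarrow> bool) ^ ('n \<Rightarrow> bool)" where
  "cube_A = (\<chi> x y. if cube_adj x y then 1 else 0)"

definition i_adj :: "'n::finite \<Rightarrow> ('n \<Rightarrow> bool) \<Rightarrow> ('n \<Rightarrow> bool) \<Rightarrow> bool" where
  "i_adj i x y \<longleftrightarrow> x i \<noteq> y i \<and> (\<forall>j. j \<noteq> i \<longrightarrow> x j = y j)"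

definition cube_alpha :: "'n::finite \<Rightarrow> real ^ ('n \<Rightarrow> bool) ^ ('n \<Rightarrow> bool)" where
  "cube_alpha i = (\<chi> x y. if i_adj i x y then 1 else 0)"

definition A_like :: "real ^ ('n::finite \<Rightarrow> bool) ^ ('n \<Rightarrow> bool) \<Rightarrow> bool" where
  "A_like B \<longleftrightarrow> B ** cube_A = cube_A ** B \<and>
     (\<forall>x y. x \<noteq> y \<and> \<not> cube_adj x y \<longrightarrow> B $ x $ y = 0)"

end

theory Submission
  imports Defs
begin

definition flip :: "('n \<Rightarrow> bool) \<Rightarrow> 'n \<Rightarrow> ('n \<Rightarrow> bool)" where
  "flip x i = x(i := \<not> x i)"

lemma flip_app: "flip x i j = (if j = i then \<not> x i else x j)"
  by (simp add: flip_def)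

lemma flip_flip[simp]: "flip (flip x i) i = x"
  by (auto simp: flip_def fun_eq_iff)

lemma flip_comm: "flip (flip x i) j = flip (flip x j) i"
  by (auto simp: flip_def fun_eq_iff)

lemma flip_neq[simp]: "flip x i \<noteq> x" "x \<noteq> flip x i"
  by (auto simp: flip_def fun_eq_iff)

lemma flip_inj[simp]: "(flip x i = flip x j) = (i = j)"
  by (auto simp: flip_def fun_eq_iff split: if_splits)

lemma cube_adj_iff: "cube_adj x y \<longleftrightarrow> (\<exists>i. y = flip x i)"
proof
  assume "cube_adj x y"
  then obtain i where "{i. x i \<noteq> y i} = {i}"
    unfolding cube_adj_def by (auto simp: card_1_singleton_iff)
  then have "y = flip x i" by (auto simp: flip_def fun_eq_iff)
  then show "\<exists>i. y = flip x i" by blast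
next
  assume "\<exists>i. y = flip x i"
  then obtain i where "y = flip x i" by blast
  then have "{i. x i \<noteq> y i} = {i}" by (auto simp: flip_def)
  then show "cube_adj x y" unfolding cube_adj_def by simp
qed

lemma i_adj_iff: "i_adj i x y \<longleftrightarrow> y = flip x i"
  by (auto simp: i_adj_def flip_def fun_eq_iff)

lemma sum_adj:
  fixes f :: "('n::finite \<Rightarrow> bool) \<Rightarrow> real"
  shows "(\<Sum>z\<in>UNIV. (if cube_adj x z then 1 else 0) * f z) = (\<Sum>i\<in>UNIV. f (flip x i))"
proof -
  have "(\<Sum>z\<in>UNIV. (if cube_adj x z then 1 else 0) * f z) = (\<Sum>z\<in>{z. cube_adj x z}. f z)"
  proof -
    have "(\<Sum>z\<in>UNIV. (if cube_adj x z then 1 else 0) * f z) = (\<Sum>z\<in>UNIV. if cube_adj x z then f z else 0)"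
      by (rule sum.cong) auto
    then show ?thesis by (simp add: sum.If_cases)
  qed
  also have "{z. cube_adj x z} = range (flip x)" by (auto simp: cube_adj_iff)
  also have "sum f (range (flip x)) = (\<Sum>i\<in>UNIV. f (flip x i))"
    by (subst sum.reindex) (auto simp: inj_on_def)
  finally show ?thesis .
qed

lemma sum_adj2:
  fixes f :: "('n::finite \<Rightarrow> bool) \<Rightarrow> real"
  shows "(\<Sum>z\<in>UNIV. f z * (if cube_adj z y then 1 else 0)) = (\<Sum>i\<in>UNIV. f (flip y i))"
proof -
  have sym: "cube_adj z y = cube_adj y z" for z
    by (auto simp: cube_adj_iff flip_def fun_eq_iff)
  show ?thesis using sum_adj[of y f] by (simp add: sym mult.commute)
qed

lemma BA_entry: "(B ** cube_A) $ x $ y = (\<Sum>i\<in>UNIV. B $ x $ flip y i)"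
  by (simp add: matrix_matrix_mult_def cube_A_def sum_adj2)

lemma AB_entry: "(cube_A ** B) $ x $ y = (\<Sum>i\<in>UNIV. B $ flip x i $ y)"
  by (simp add: matrix_matrix_mult_def cube_A_def sum_adj)

lemma zero_entry:
  assumes "A_like B" "v \<noteq> u" "\<And>m. v \<noteq> flip u m"
  shows "B $ u $ v = 0"
  using assms unfolding A_like_def by (auto simp: cube_adj_iff)

lemma sum_two:
  fixes g :: "'n::finite \<Rightarrow> real"
  assumes "i \<noteq> j" "\<And>k. k \<noteq> i \<Longrightarrow> k \<noteq> j \<Longrightarrow> g k = 0"
  shows "(\<Sum>k\<in>UNIV. g k) = g i + g j"
proof -
  have "(\<Sum>k\<in>UNIV. g k) = (\<Sum>k\<in>{i,j}. g k)"
    by (rule sum.mono_neutral_right) (use assms in auto)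
  then show ?thesis using assms by simp
qed

lemma sum_one:
  fixes g :: "'n::finite \<Rightarrow> real"
  assumes "\<And>k. k \<noteq> i \<Longrightarrow> g k = 0"
  shows "(\<Sum>k\<in>UNIV. g k) = g i"
proof -
  have "(\<Sum>k\<in>UNIV. g k) = (\<Sum>k\<in>{i}. g k)"
    by (rule sum.mono_neutral_right) (use assms in auto)
  then show ?thesis by simp
qed

lemma flip_const:
  fixes f :: "('n::finite \<Rightarrow> bool) \<Rightarrow> 'b"
  assumes "\<And>x i. f (flip x i) = f x"
  shows "f x = f y"
proof -
  have "\<forall>x y. {i. x i \<noteq> y i} \<subseteq> F \<longrightarrow> f x = f y" if "finite F" for F :: "'n set"
    using that
  proof (induction F rule: finite_induct)
    case empty
    then show ?case by (auto simp: fun_eq_iff)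
  next
    case (insert a F)
    show ?case
    proof (intro allI impI)
      fix x y :: "'n \<Rightarrow> bool"
      assume h: "{i. x i \<noteq> y i} \<subseteq> insert a F"
      define x' where "x' = (if x a \<noteq> y a then flip x a else x)"
      have fx: "f x' = f x" by (simp add: x'_def assms)
      have "{i. x' i \<noteq> y i} \<subseteq> F"
      proof
        fix c assume c: "c \<in> {i. x' i \<noteq> y i}"
        show "c \<in> F"
        proof (cases "c = a")
          case True
          then show ?thesis using c by (cases "x a = y a") (simp_all add: x'_def flip_app)
        next
          case False
          then have "x' c = x c" by (simp add: x'_def flip_app)
          then show ?thesis using c h False by auto
        qed
      qed
      then have "f x' = f y" using insert.IH by blast
      then show "f x = f y" using fx by simp
    qed
  qed
  from this[of UNIV] show ?thesis by simp
qed

lemma vecI: "(\<And>i. x $ i = y $ i) \<Longrightarrow> x = y" by (simp add: vec_eq_iff)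

lemma neqI: "u c \<noteq> v c \<Longrightarrow> u \<noteq> v" by auto

lemma L1: "k \<noteq> i \<Longrightarrow> flip (flip x i) k \<noteq> x"
  by (cases "m=i"; cases "m=j"; cases "m=k"; ((rule neqI[of _ i], simp add: flip_app; fail) | (rule neqI[of _ j], simp add: flip_app; fail) | (rule neqI[of _ k], simp add: flip_app; fail)))

lemma L2: "k \<noteq> i \<Longrightarrow> flip (flip x i) k \<noteq> flip x m"
  by (cases "m=i"; cases "m=j"; cases "m=k"; ((rule neqI[of _ i], simp add: flip_app; fail) | (rule neqI[of _ j], simp add: flip_app; fail) | (rule neqI[of _ k], simp add: flip_app; fail)))

lemma L3: "k \<noteq> i \<Longrightarrow> flip x i \<noteq> flip (flip x k) m"
  by (cases "m=i"; cases "m=j"; cases "m=k"; ((rule neqI[of _ i], simp add: flip_app; fail) | (rule neqI[of _ j], simp add: flip_app; fail) | (rule neqI[of _ k], simp add: flip_app; fail)))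

lemma L4: "\<lbrakk>i\<noteq>j; k\<noteq>i; k\<noteq>j\<rbrakk> \<Longrightarrow> flip (flip (flip x i) j) k \<noteq> x"
  by (cases "m=i"; cases "m=j"; cases "m=k"; ((rule neqI[of _ i], simp add: flip_app; fail) | (rule neqI[of _ j], simp add: flip_app; fail) | (rule neqI[of _ k], simp add: flip_app; fail)))

lemma L5: "\<lbrakk>i\<noteq>j; k\<noteq>i; k\<noteq>j\<rbrakk> \<Longrightarrow> flip (flip (flip x i) j) k \<noteq> flip x m"
  by (cases "m=i"; cases "m=j"; cases "m=k"; ((rule neqI[of _ i], simp add: flip_app; fail) | (rule neqI[of _ j], simp add: flip_app; fail) | (rule neqI[of _ k], simp add: flip_app; fail)))

lemma L6: "\<lbrakk>i\<noteq>j; k\<noteq>i; k\<noteq>j\<rbrakk> \<Longrightarrow> flip (flip x i) j \<noteq> flip x k"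
  by (cases "m=i"; cases "m=j"; cases "m=k"; ((rule neqI[of _ i], simp add: flip_app; fail) | (rule neqI[of _ j], simp add: flip_app; fail) | (rule neqI[of _ k], simp add: flip_app; fail)))

lemma L7: "\<lbrakk>i\<noteq>j; k\<noteq>i; k\<noteq>j\<rbrakk> \<Longrightarrow> flip (flip x i) j \<noteq> flip (flip x k) m"
  by (cases "m=i"; cases "m=j"; cases "m=k"; ((rule neqI[of _ i], simp add: flip_app; fail) | (rule neqI[of _ j], simp add: flip_app; fail) | (rule neqI[of _ k], simp add: flip_app; fail)))

lemma L8: "\<lbrakk>i\<noteq>j; k\<noteq>i; k\<noteq>j\<rbrakk> \<Longrightarrow> flip (flip x j) k \<noteq> flip x i"
  by (cases "m=i"; cases "m=j"; cases "m=k"; ((rule neqI[of _ i], simp add: flip_app; fail) | (rule neqI[of _ j], simp add: flip_app; fail) | (rule neqI[of _ k], simp add: flip_app; fail)))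

lemma L9: "\<lbrakk>i\<noteq>j; k\<noteq>i; k\<noteq>j\<rbrakk> \<Longrightarrow> flip (flip x j) k \<noteq> flip (flip x i) m"
  by (cases "m=i"; cases "m=j"; cases "m=k"; ((rule neqI[of _ i], simp add: flip_app; fail) | (rule neqI[of _ j], simp add: flip_app; fail) | (rule neqI[of _ k], simp add: flip_app; fail)))

lemma L10: "\<lbrakk>i\<noteq>j; k\<noteq>i; k\<noteq>j\<rbrakk> \<Longrightarrow> flip x j \<noteq> flip (flip x i) k"
  by (cases "m=i"; cases "m=j"; cases "m=k"; ((rule neqI[of _ i], simp add: flip_app; fail) | (rule neqI[of _ j], simp add: flip_app; fail) | (rule neqI[of _ k], simp add: flip_app; fail)))

lemma L11: "\<lbrakk>i\<noteq>j; k\<noteq>i; k\<noteq>j\<rbrakk> \<Longrightarrow> flip x j \<noteq> flip (flip (flip x i) k) m"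
  by (cases "m=i"; cases "m=j"; cases "m=k"; ((rule neqI[of _ i], simp add: flip_app; fail) | (rule neqI[of _ j], simp add: flip_app; fail) | (rule neqI[of _ k], simp add: flip_app; fail)))


lemma diag_step:
  assumes "A_like B"
  shows "B $ x $ x = B $ flip x i $ flip x i"
proof -
  have c: "(B ** cube_A) $ x $ flip x i = (cube_A ** B) $ x $ flip x i"
    using assms by (simp add: A_like_def)
  have l: "(B ** cube_A) $ x $ flip x i = B $ x $ x"
    unfolding BA_entry
  proof (subst sum_one[of i])
    fix k assume "k \<noteq> i"
    then show "B $ x $ flip (flip x i) k = 0"
      by (intro zero_entry[OF assms] L1 L2)
  qed simp
  have r: "(cube_A ** B) $ x $ flip x i = B $ flip x i $ flip x i"
    unfolding AB_entry
  proof (subst sum_one[of i])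
    fix k assume "k \<noteq> i"
    then show "B $ flip x k $ flip x i = 0"
      by (intro zero_entry[OF assms] L3) simp
  qed simp
  show ?thesis using c l r by simp
qed

lemma square:
  assumes "A_like B" "i \<noteq> j"
  shows "B $ x $ flip x i + B $ x $ flip x j
           = B $ flip x i $ flip (flip x i) j + B $ flip x j $ flip (flip x j) i"
    and "B $ flip x i $ x + B $ flip x i $ flip (flip x j) i
           = B $ x $ flip x j + B $ flip (flip x i) j $ flip x j"
proof -
  have ij: "j \<noteq> i" using assms(2) by simp
  have y: "flip (flip x i) j = flip (flip x j) i" by (rule flip_comm)
  have c1: "(B ** cube_A) $ x $ flip (flip x i) j = (cube_A ** B) $ x $ flip (flip x i) j"
    using assms by (simp add: A_like_def)
  have l1: "(B ** cube_A) $ x $ flip (flip x i) j = B $ x $ flip x i + B $ x $ flip x j"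
    unfolding BA_entry
  proof (subst sum_two[OF ij])
    fix k assume "k \<noteq> j" "k \<noteq> i"
    then show "B $ x $ flip (flip (flip x i) j) k = 0"
      using assms(2) by (intro zero_entry[OF assms(1)] L4 L5) auto
  qed (metis flip_flip flip_comm)
  have r1: "(cube_A ** B) $ x $ flip (flip x i) j
      = B $ flip x i $ flip (flip x i) j + B $ flip x j $ flip (flip x j) i"
    unfolding AB_entry
  proof (subst sum_two[OF assms(2)])
    fix k assume "k \<noteq> i" "k \<noteq> j"
    then show "B $ flip x k $ flip (flip x i) j = 0"
      using assms(2) by (intro zero_entry[OF assms(1)] L6 L7) auto
  qed (simp add: y)
  show "B $ x $ flip x i + B $ x $ flip x j
           = B $ flip x i $ flip (flip x i) j + B $ flip x j $ flip (flip x j) i"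
    using c1 l1 r1 by simp
  have c2: "(B ** cube_A) $ flip x i $ flip x j = (cube_A ** B) $ flip x i $ flip x j"
    using assms by (simp add: A_like_def)
  have l2: "(B ** cube_A) $ flip x i $ flip x j = B $ flip x i $ x + B $ flip x i $ flip (flip x j) i"
    unfolding BA_entry
  proof (subst sum_two[OF ij])
    fix k assume "k \<noteq> j" "k \<noteq> i"
    then show "B $ flip x i $ flip (flip x j) k = 0"
      using assms(2) by (intro zero_entry[OF assms(1)] L8 L9) auto
  qed simp
  have r2: "(cube_A ** B) $ flip x i $ flip x j = B $ x $ flip x j + B $ flip (flip x i) j $ flip x j"
    unfolding AB_entry
  proof (subst sum_two[OF assms(2)])
    fix k assume "k \<noteq> i" "k \<noteq> j"
    then show "B $ flip (flip x i) k $ flip x j = 0"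
      using assms(2) by (intro zero_entry[OF assms(1)] L10 L11) auto
  qed simp
  show "B $ flip x i $ x + B $ flip x i $ flip (flip x j) i
           = B $ x $ flip x j + B $ flip (flip x i) j $ flip x j"
    using c2 l2 r2 by simp
qed

lemma edge_step:
  assumes "A_like B" "transpose B = B"
  shows "B $ flip x i $ flip (flip x i) j = B $ x $ flip x j"
proof -
  have sym: "B $ u $ v = B $ v $ u" for u v
  proof -
    have "B $ u $ v = transpose B $ u $ v" using assms(2) by simp
    also have "\<dots> = B $ v $ u" by (simp add: transpose_def)
    finally show ?thesis .
  qed
  show ?thesis
  proof (cases "i = j")
    case True
    then show ?thesis by (simp add: sym[of "flip x j"])
  next
    case False
    note s = square[OF assms(1) False, of x]
    have y: "flip (flip x i) j = flip (flip x j) i" by (rule flip_comm)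
    have e1: "B $ flip x i $ x = B $ x $ flip x i" by (rule sym)
    have e2: "B $ flip (flip x i) j $ flip x j = B $ flip x j $ flip (flip x j) i"
      unfolding y by (rule sym)
    have e3: "B $ flip x i $ flip (flip x j) i = B $ flip x i $ flip (flip x i) j"
      by (simp only: y)
    show ?thesis using s e1 e2 e3 by linarith
  qed
qed


lemma delta1:
  fixes f :: "('n::finite \<Rightarrow> bool) \<Rightarrow> real"
  shows "(\<Sum>z\<in>UNIV. (if z = c then 1 else 0) * f z) = f c"
  by (subst sum_one[of c]) auto

lemma delta2:
  fixes f :: "('n::finite \<Rightarrow> bool) \<Rightarrow> real"
  shows "(\<Sum>z\<in>UNIV. f z * (if z = c then 1 else 0)) = f c"
  by (subst sum_one[of c]) auto

lemma alpha_entry: "cube_alpha i $ x $ y = (if y = flip x i then 1 else 0)"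
  by (simp add: cube_alpha_def i_adj_iff)

lemma flip_eq_swap: "(y = flip x i) = (x = flip y i)"
  by auto

lemma adj_swap: "cube_adj (flip x i) y = cube_adj x (flip y i)"
  unfolding cube_adj_iff
  by (metis flip_comm flip_flip)

lemma alpha_in:
  "transpose (cube_alpha i) = cube_alpha i \<and> A_like (cube_alpha i)"
proof -
  have t: "transpose (cube_alpha i) = cube_alpha i"
    by (auto simp: vec_eq_iff transpose_def alpha_entry)
  have c: "cube_alpha i ** cube_A = cube_A ** cube_alpha i"
  proof -
    have "(cube_alpha i ** cube_A) $ x $ y = (cube_A ** cube_alpha i) $ x $ y" for x y
    proof -
      have "(cube_alpha i ** cube_A) $ x $ y = cube_A $ flip x i $ y"
        by (simp add: matrix_matrix_mult_def alpha_entry delta1)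
      moreover have "(cube_A ** cube_alpha i) $ x $ y = cube_A $ x $ flip y i"
        by (simp add: matrix_matrix_mult_def alpha_entry flip_eq_swap[of y] delta2)
      ultimately show ?thesis by (simp add: cube_A_def adj_swap)
    qed
    then show ?thesis by (simp add: vec_eq_iff)
  qed
  have z: "\<forall>x y. x \<noteq> y \<and> \<not> cube_adj x y \<longrightarrow> cube_alpha i $ x $ y = 0"
    by (auto simp: alpha_entry cube_adj_iff)
  show ?thesis using t c z by (simp add: A_like_def)
qed

lemma mat1_in: "transpose (mat 1 :: real ^ ('n::finite \<Rightarrow> bool) ^ ('n \<Rightarrow> bool)) = mat 1
   \<and> A_like (mat 1 :: real ^ ('n::finite \<Rightarrow> bool) ^ ('n \<Rightarrow> bool))"
proof -
  have "(mat 1 :: real ^ ('n::finite \<Rightarrow> bool) ^ ('n \<Rightarrow> bool)) $ x $ y = 0" if "x \<noteq> y" for x y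
    using that by (simp add: mat_def)
  then show ?thesis by (simp add: transpose_mat A_like_def matrix_mul_lid matrix_mul_rid)
qed

lemma subspace_S: "subspace {B :: real ^ ('n::finite \<Rightarrow> bool) ^ ('n \<Rightarrow> bool). transpose B = B \<and> A_like B}"
  unfolding subspace_def
proof (intro conjI ballI allI)
  show "0 \<in> {B :: real ^ ('n::finite \<Rightarrow> bool) ^ ('n \<Rightarrow> bool). transpose B = B \<and> A_like B}"
    by (simp add: vec_eq_iff transpose_def A_like_def matrix_matrix_mult_def)
next
  fix B C :: "real ^ ('n::finite \<Rightarrow> bool) ^ ('n \<Rightarrow> bool)"
  assume "B \<in> {B. transpose B = B \<and> A_like B}" "C \<in> {B. transpose B = B \<and> A_like B}"
  then have b: "transpose B = B" "B ** cube_A = cube_A ** B" "\<forall>x y. x \<noteq> y \<and> \<not> cube_adj x y \<longrightarrow> B $ x $ y = 0"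
    and c: "transpose C = C" "C ** cube_A = cube_A ** C" "\<forall>x y. x \<noteq> y \<and> \<not> cube_adj x y \<longrightarrow> C $ x $ y = 0"
    by (auto simp: A_like_def)
  have "transpose (B + C) = transpose B + transpose C"
    by (simp add: vec_eq_iff transpose_def)
  moreover have "(B + C) ** cube_A = B ** cube_A + C ** cube_A"
    by (simp add: vec_eq_iff matrix_matrix_mult_def sum.distrib distrib_right)
  moreover have "cube_A ** (B + C) = cube_A ** B + cube_A ** C"
    by (rule matrix_add_ldistrib)
  ultimately show "B + C \<in> {B. transpose B = B \<and> A_like B}"
    using b c by (auto simp: A_like_def)
next
  fix r :: real and B :: "real ^ ('n::finite \<Rightarrow> bool) ^ ('n \<Rightarrow> bool)"
  assume "B \<in> {B. transpose B = B \<and> A_like B}"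
  then show "r *\<^sub>R B \<in> {B. transpose B = B \<and> A_like B}"
    by (auto simp: A_like_def transpose_scalar matrix_scalar_ac scalar_matrix_assoc[symmetric])
qed

lemma S_decomp:
  fixes B :: "real ^ ('n::finite \<Rightarrow> bool) ^ ('n \<Rightarrow> bool)"
  assumes "A_like B" "transpose B = B"
  shows "B = B $ (\<lambda>_. False) $ (\<lambda>_. False) *\<^sub>R mat 1
     + (\<Sum>j\<in>UNIV. B $ (\<lambda>_. False) $ flip (\<lambda>_. False) j *\<^sub>R cube_alpha j)"
proof -
  define x0 :: "'n \<Rightarrow> bool" where "x0 = (\<lambda>_. False)"
  have dconst: "B $ x $ x = B $ x0 $ x0" for x
    by (rule flip_const[where f = "\<lambda>x. B $ x $ x"]) (simp add: diag_step[OF assms(1), symmetric])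
  have wconst: "B $ x $ flip x j = B $ x0 $ flip x0 j" for x j
    by (rule flip_const[where f = "\<lambda>x. B $ x $ flip x j"]) (simp add: edge_step[OF assms])
  have ent: "B $ x $ y = (B $ x0 $ x0 *\<^sub>R mat 1
     + (\<Sum>j\<in>UNIV. B $ x0 $ flip x0 j *\<^sub>R cube_alpha j)) $ x $ y" for x y
  proof -
    have rhs: "(B $ x0 $ x0 *\<^sub>R mat 1 + (\<Sum>j\<in>UNIV. B $ x0 $ flip x0 j *\<^sub>R cube_alpha j)) $ x $ y
      = B $ x0 $ x0 * (if x = y then 1 else 0) + (\<Sum>j\<in>UNIV. B $ x0 $ flip x0 j * (if y = flip x j then 1 else 0))"
      by (simp add: sum_component mat_def alpha_entry)
    show ?thesis
    proof (cases "x = y")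
      case True
      then show ?thesis using rhs dconst by simp
    next
      case False
      show ?thesis
      proof (cases "\<exists>i. y = flip x i")
        case True
        then obtain i where i: "y = flip x i" by blast
        have "(\<Sum>j\<in>UNIV. B $ x0 $ flip x0 j * (if y = flip x j then 1 else 0)) = B $ x0 $ flip x0 i"
          unfolding i by (subst sum_one[of i]) auto
        then show ?thesis using rhs False wconst[of x i] i by simp
      next
        case nf: False
        then have "B $ x $ y = 0" using False by (intro zero_entry[OF assms(1)]) auto
        moreover have "(\<Sum>j\<in>UNIV. B $ x0 $ flip x0 j * (if y = flip x j then 1 else 0)) = 0"
          using nf by (intro sum.neutral) auto
        ultimately show ?thesis using rhs False by simp
      qed
    qed
  qed
  show ?thesis unfolding x0_def[symmetric] by (intro vecI) (rule ent)
qed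

theorem corollary8p4:
  fixes S :: "(real ^ ('n::finite \<Rightarrow> bool) ^ ('n \<Rightarrow> bool)) set"
  defines "S \<equiv> {B. transpose B = B \<and> A_like B}"
  shows "inj (cube_alpha :: 'n \<Rightarrow> _)
    \<and> mat 1 \<notin> range (cube_alpha :: 'n \<Rightarrow> _)
    \<and> independent (insert (mat 1) (range (cube_alpha :: 'n \<Rightarrow> _)))
    \<and> span (insert (mat 1) (range (cube_alpha :: 'n \<Rightarrow> _))) = S
    \<and> dim S = CARD('n) + 1"
proof -
  define x0 :: "'n \<Rightarrow> bool" where "x0 = (\<lambda>_. False)"
  define T where "T = insert (mat 1) (range (cube_alpha :: 'n \<Rightarrow> _))"
  have inj: "inj (cube_alpha :: 'n \<Rightarrow> _)"
  proof (rule injI)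
    fix i j :: 'n assume "cube_alpha i = cube_alpha j"
    then have "cube_alpha i $ x0 $ flip x0 i = cube_alpha j $ x0 $ flip x0 i" by simp
    then show "i = j" by (simp add: alpha_entry split: if_splits)
  qed
  have nin: "mat 1 \<notin> range (cube_alpha :: 'n \<Rightarrow> _)"
  proof
    assume "mat 1 \<in> range (cube_alpha :: 'n \<Rightarrow> _)"
    then obtain i :: 'n where "mat 1 = cube_alpha i" by blast
    then have "(mat 1 :: real ^ ('n \<Rightarrow> bool) ^ ('n \<Rightarrow> bool)) $ x0 $ x0 = cube_alpha i $ x0 $ x0" by simp
    then show False by (simp add: alpha_entry mat_def)
  qed
  have sumT: "(\<Sum>v\<in>T. u v *\<^sub>R v) = u (mat 1) *\<^sub>R mat 1 + (\<Sum>j\<in>UNIV. u (cube_alpha j) *\<^sub>R cube_alpha j)" for u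
    unfolding T_def using nin inj by (simp add: sum.reindex)
  have ind: "independent T"
  proof
    assume "dependent T"
    then obtain u where u: "\<exists>v\<in>T. u v \<noteq> 0" "(\<Sum>v\<in>T. u v *\<^sub>R v) = 0"
      unfolding T_def by (subst (asm) dependent_finite) auto
    have e: "u (mat 1) * (if x = y then 1 else 0) + (\<Sum>j\<in>UNIV. u (cube_alpha j) * (if y = flip x j then 1 else 0)) = 0" for x y
    proof -
      have "(u (mat 1) *\<^sub>R mat 1 + (\<Sum>j\<in>UNIV. u (cube_alpha j) *\<^sub>R cube_alpha j)) $ x $ y = 0"
        using u(2) sumT by simp
      then show ?thesis by (simp add: sum_component mat_def alpha_entry)
    qed
    have m: "u (mat 1) = 0" using e[of x0 x0] by simp
    have a: "u (cube_alpha i) = 0" for i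
    proof -
      have "(\<Sum>j\<in>UNIV. u (cube_alpha j) * (if flip x0 i = flip x0 j then 1 else 0)) = u (cube_alpha i)"
        by (subst sum_one[of i]) auto
      then show ?thesis using e[of x0 "flip x0 i"] by simp
    qed
    show False using u(1) m a unfolding T_def by auto
  qed
  have sp: "span T = S"
  proof
    show "span T \<subseteq> S"
      unfolding S_def T_def
      by (rule span_minimal[OF _ subspace_S]) (use alpha_in mat1_in in auto)
    show "S \<subseteq> span T"
    proof
      fix B assume "B \<in> S"
      then have B: "A_like B" "transpose B = B" unfolding S_def by auto
      have "B $ (\<lambda>_. False) $ (\<lambda>_. False) *\<^sub>R mat 1
     + (\<Sum>j\<in>UNIV. B $ (\<lambda>_. False) $ flip (\<lambda>_. False) j *\<^sub>R cube_alpha j) \<in> span T"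
        unfolding T_def
        by (intro span_add span_scale span_sum span_base) auto
      then show "B \<in> span T" by (simp only: S_decomp[OF B, symmetric])
    qed
  qed
  have cT: "card T = CARD('n) + 1"
    unfolding T_def using nin inj by (simp add: card_image)
  have "dim S = CARD('n) + 1"
    using dim_span_eq_card_independent[OF ind] sp cT by simp
  then show ?thesis using inj nin ind sp unfolding T_def by simp
qed

end
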